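(* Let $S\subset\mathbb{R}^2$ be a finite set in general position and let $a,b\in S$. If $ab$ is an exit edge of $S$ with two distinct witnesses $c,d\in S$, then in the dual arrangement $\mathcal{A}$ of $S^*$ the two unmarked triangular cells bounded by $a^*,b^*,c^*$ and by $a^*,b^*,d^*$ both have exit vertex $a^*\cap b^*$, i.e. they form an hourglass.
   Context: General position: no three points collinear. For distinct $a,b,c\in S$, $ab$ is an exit edge with witness $c$ if there is no $p\in S$ such that the line through $a$ and $p$ strictly separates $b$ from $c$, and no $p\in S$ such that the line through $b$ and $p$ strictly separates $a$ from $c$. Duality: $p=(p_x,p_y)\mapsto p^*: y=p_xx-p_y$, lines in the projective plane $\mathbb{P}^2$; $\mathcal{A}$ is the arrangement of $S^*=\{s^*:s\in S\}$. The marked cell is the cell containing the vertical point at infinity. Lines are oriented in the direction of increasing $x$; for an unmarked triangular cell, the exit vertex is the unique vertex at which one incident side is directed into it and the other out of it. An hourglass is a pair of distinct unmarked triangular cells with the same exit vertex. *)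

theory Defs
  imports "HOL-Analysis.Analysis" "HOL-Analysis.Cross3"
begin

type_synonym pt = "real \<times> real"

definition orient :: "pt \<Rightarrow> pt \<Rightarrow> pt \<Rightarrow> real" where
  "orient a p x = (fst p - fst a) * (snd x - snd a) - (snd p - snd a) * (fst x - fst a)"

definition general_position :: "pt set \<Rightarrow> bool" where
  "general_position S \<longleftrightarrow> (\<forall>a\<in>S. \<forall>b\<in>S. \<forall>c\<in>S. a \<noteq> b \<and> a \<noteq> c \<and> b \<noteq> c \<longrightarrow> orient a b c \<noteq> 0)"

definition strictly_separates :: "pt \<Rightarrow> pt \<Rightarrow> pt \<Rightarrow> pt \<Rightarrow> bool" where
  "strictly_separates a p x y \<longleftrightarrow> p \<noteq> a \<and> orient a p x * orient a p y < 0"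

definition exit_edge_witness :: "pt set \<Rightarrow> pt \<Rightarrow> pt \<Rightarrow> pt \<Rightarrow> bool" where
  "exit_edge_witness S a b c \<longleftrightarrow>
     a \<in> S \<and> b \<in> S \<and> c \<in> S \<and> a \<noteq> b \<and> a \<noteq> c \<and> b \<noteq> c \<and>
     \<not> (\<exists>p\<in>S. strictly_separates a p b c) \<and>
     \<not> (\<exists>p\<in>S. strictly_separates b p a c)"

(* Projective plane P^2 modelled as the unit sphere of R^3 modulo antipodes.
   Homogeneous coordinates (X,Y,Z) correspond to the affine point (X/Z, Y/Z).
   The dual line p^*: y = p_x x - p_y becomes p_x X - Y - p_y Z = 0. *)
definition dual_normal :: "pt \<Rightarrow> real^3" where
  "dual_normal p = vector [fst p, -1, - snd p]"

definition dline :: "pt \<Rightarrow> (real^3) set" where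
  "dline p = {v \<in> sphere 0 1. dual_normal p \<bullet> v = 0}"

(* A cell of the arrangement of S^*, represented by one of its two antipodal lifts to the sphere *)
definition is_cell :: "pt set \<Rightarrow> (real^3) set \<Rightarrow> bool" where
  "is_cell S C \<longleftrightarrow> C \<in> components (sphere 0 1 - \<Union>(dline ` S))"

(* the marked cell contains the vertical point at infinity (0:1:0) *)
definition marked :: "(real^3) set \<Rightarrow> bool" where
  "marked C \<longleftrightarrow> vector [0, 1, 0] \<in> C \<or> vector [0, -1, 0] \<in> C"

definition tri_cell :: "pt set \<Rightarrow> pt \<Rightarrow> pt \<Rightarrow> pt \<Rightarrow> (real^3) set \<Rightarrow> bool" where
  "tri_cell S a b c C \<longleftrightarrow> is_cell S C \<and>
     C \<in> components (sphere 0 1 - (dline a \<union> dline b \<union> dline c))"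

(* Orientation of p^* by increasing x: at a point w of the great circle dline p the positive
   tangent direction is cross3 w (dual_normal p). *)
definition side_into :: "pt \<Rightarrow> (real^3) set \<Rightarrow> real^3 \<Rightarrow> bool" where
  "side_into p C w \<longleftrightarrow>
     (\<exists>e>0. \<forall>t. 0 < t \<and> t < e \<longrightarrow> sgn (w - t *\<^sub>R cross3 w (dual_normal p)) \<in> closure C)"

definition side_outof :: "pt \<Rightarrow> (real^3) set \<Rightarrow> real^3 \<Rightarrow> bool" where
  "side_outof p C w \<longleftrightarrow>
     (\<exists>e>0. \<forall>t. 0 < t \<and> t < e \<longrightarrow> sgn (w + t *\<^sub>R cross3 w (dual_normal p)) \<in> closure C)"

definition tri_vertex :: "pt \<Rightarrow> pt \<Rightarrow> pt \<Rightarrow> (real^3) set \<Rightarrow> real^3 \<Rightarrow> bool" where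
  "tri_vertex a b c C w \<longleftrightarrow> w \<in> closure C \<and>
     (\<exists>p\<in>{a,b,c}. \<exists>q\<in>{a,b,c}. p \<noteq> q \<and> w \<in> dline p \<and> w \<in> dline q)"

definition exit_vertex_prop :: "pt \<Rightarrow> pt \<Rightarrow> pt \<Rightarrow> (real^3) set \<Rightarrow> real^3 \<Rightarrow> bool" where
  "exit_vertex_prop a b c C w \<longleftrightarrow> w \<in> closure C \<and>
     (\<exists>p\<in>{a,b,c}. \<exists>q\<in>{a,b,c}. p \<noteq> q \<and> w \<in> dline p \<and> w \<in> dline q \<and>
        side_into p C w \<and> side_outof q C w)"

definition unmarked_tri_exit_ab :: "pt set \<Rightarrow> pt \<Rightarrow> pt \<Rightarrow> pt \<Rightarrow> (real^3) set \<Rightarrow> bool" where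
  "unmarked_tri_exit_ab S a b c C \<longleftrightarrow> tri_cell S a b c C \<and> \<not> marked C \<and>
     (\<forall>w. tri_vertex a b c C w \<longrightarrow> (exit_vertex_prop a b c C w \<longleftrightarrow> w \<in> dline a \<inter> dline b))"

end

theory Submission
  imports Defs
begin

lemma dn_comp: "dual_normal p $ 1 = fst p" "dual_normal p $ 2 = -1" "dual_normal p $ 3 = - snd p"
  by (simp_all add: dual_normal_def vector_3)

lemma triple_cyc: fixes x y z :: "real^3"
  shows "x \<bullet> (cross3 y z) = y \<bullet> (cross3 z x)" "x \<bullet> (cross3 y z) = z \<bullet> (cross3 x y)"
  by (simp_all add: cross3_simps)

lemma triple_swap: fixes x y z :: "real^3"
  shows "x \<bullet> (cross3 y z) = - (z \<bullet> (cross3 y x))"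
  by (simp add: cross3_simps)

lemma cross_ident: fixes n1 n2 n3 v :: "real^3"
  shows "(n1 \<bullet> (cross3 n2 n3)) *\<^sub>R v = (n1 \<bullet> v) *\<^sub>R (cross3 n2 n3) + (n2 \<bullet> v) *\<^sub>R (cross3 n3 n1) + (n3 \<bullet> v) *\<^sub>R (cross3 n1 n2)"
  by (simp add: cross3_simps forall_3) 

lemma triple_orient: "dual_normal a \<bullet> (cross3 (dual_normal b) (dual_normal c)) = - orient a b c"
  by (simp add: cross3_simps dn_comp orient_def)

lemma bary: "orient a b c *\<^sub>R dual_normal p = orient p b c *\<^sub>R dual_normal a + orient a p c *\<^sub>R dual_normal b + orient a b p *\<^sub>R dual_normal c"
  by (simp add: vec_eq_iff forall_3 dn_comp orient_def algebra_simps)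

lemma cross_dn: "cross3 (dual_normal p) (dual_normal q) = 0 \<Longrightarrow> p = q"
  by (simp add: vec_eq_iff forall_3 cross3_def dn_comp prod_eq_iff)

definition Cs :: "real^3 \<Rightarrow> real^3 \<Rightarrow> real^3 \<Rightarrow> (real^3) set" where
  "Cs n1 n2 n3 = {v \<in> sphere 0 1. n1 \<bullet> v > 0 \<and> n2 \<bullet> v > 0 \<and> n3 \<bullet> v < 0}"
definition Ws :: "real^3 \<Rightarrow> real^3 \<Rightarrow> real^3 \<Rightarrow> (real^3) set" where
  "Ws n1 n2 n3 = {v \<in> sphere 0 1. n1 \<bullet> v \<ge> 0 \<and> n2 \<bullet> v \<ge> 0 \<and> n3 \<bullet> v \<le> 0}"

lemma zero_from_ortho: fixes n1 n2 n3 v :: "real^3"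
  assumes "n1 \<bullet> (cross3 n2 n3) \<noteq> 0" "n1 \<bullet> v = 0" "n2 \<bullet> v = 0" "n3 \<bullet> v = 0"
  shows "v = 0"
  using cross_ident[of n1 n2 n3 v] assms by simp

lemma triple_nz: fixes n1 n3 v :: "real^3"
  assumes "v \<noteq> 0" "n1 \<bullet> v = 0" "n3 \<bullet> v = 0" "cross3 n1 n3 \<noteq> 0"
  shows "n3 \<bullet> (cross3 v n1) \<noteq> 0"
proof
  assume h: "n3 \<bullet> (cross3 v n1) = 0"
  define Y where "Y = cross3 n1 n3"
  have "n1 \<bullet> (cross3 n3 Y) = Y \<bullet> Y" using triple_cyc(2)[of n1 n3 Y] Y_def by simp
  also have "\<dots> \<noteq> 0" using assms(4) Y_def by simp
  finally have t: "n1 \<bullet> (cross3 n3 Y) \<noteq> 0" .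
  have "Y \<bullet> v = 0" using h triple_cyc(2)[of v n1 n3] Y_def by (simp add: inner_commute)
  then have "v = 0" using zero_from_ortho[OF t] assms by simp
  then show False using assms(1) by simp
qed

lemma sgn_in_Ws: "sgn u \<in> Ws n1 n2 n3 \<longleftrightarrow> u \<noteq> 0 \<and> n1 \<bullet> u \<ge> 0 \<and> n2 \<bullet> u \<ge> 0 \<and> n3 \<bullet> u \<le> 0"
proof (cases "u = 0")
  case True then show ?thesis by (simp add: Ws_def)
next
  case False
  then have np: "norm u > 0" by simp
  have e: "\<And>n. n \<bullet> sgn u = (n \<bullet> u) / norm u" by (simp add: sgn_div_norm inner_scaleR_right divide_inverse mult.commute)
  show ?thesis using False np by (simp add: Ws_def e norm_sgn divide_nonneg_pos divide_le_0_iff zero_le_divide_iff)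
qed

lemma sgn_in_Cs: "sgn u \<in> Cs n1 n2 n3 \<longleftrightarrow> u \<noteq> 0 \<and> n1 \<bullet> u > 0 \<and> n2 \<bullet> u > 0 \<and> n3 \<bullet> u < 0"
proof (cases "u = 0")
  case True then show ?thesis by (simp add: Cs_def)
next
  case False
  then have np: "norm u > 0" by simp
  have e: "\<And>n. n \<bullet> sgn u = (n \<bullet> u) / norm u" by (simp add: sgn_div_norm inner_scaleR_right divide_inverse mult.commute)
  show ?thesis using False np by (simp add: Cs_def e norm_sgn divide_less_0_iff zero_less_divide_iff)
qed

lemma closed_Ws: "closed (Ws n1 n2 n3)"
proof -
  have "Ws n1 n2 n3 = sphere 0 1 \<inter> {v. n1 \<bullet> v \<ge> 0} \<inter> {v. n2 \<bullet> v \<ge> 0} \<inter> {v. n3 \<bullet> v \<le> 0}"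
    by (auto simp: Ws_def)
  then show ?thesis by (simp add: closed_Int closed_halfspace_ge closed_halfspace_le)
qed

lemma closure_Cs: assumes "Cs n1 n2 n3 \<noteq> {}" shows "closure (Cs n1 n2 n3) = Ws n1 n2 n3"
proof
  show "closure (Cs n1 n2 n3) \<subseteq> Ws n1 n2 n3"
    using closed_Ws by (intro closure_minimal) (auto simp: Cs_def Ws_def)
next
  show "Ws n1 n2 n3 \<subseteq> closure (Cs n1 n2 n3)"
  proof
    fix x assume x: "x \<in> Ws n1 n2 n3"
    obtain y where y: "y \<in> Cs n1 n2 n3" using assms by blast
    define f where "f = (\<lambda>s::real. sgn ((1 - s) *\<^sub>R x + s *\<^sub>R y))"
    have x0: "x \<noteq> 0" and nx: "norm x = 1" using x by (auto simp: Ws_def)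
    have "((\<lambda>s::real. (1 - s) *\<^sub>R x + s *\<^sub>R y) \<longlongrightarrow> (1 - 0) *\<^sub>R x + 0 *\<^sub>R y) (at_right 0)"
      by (intro tendsto_intros)
    then have "(f \<longlongrightarrow> sgn x) (at_right 0)" unfolding f_def using x0
      by (intro tendsto_sgn) auto
    moreover have "sgn x = x" using nx by (simp add: sgn_div_norm)
    moreover have "eventually (\<lambda>s. f s \<in> closure (Cs n1 n2 n3)) (at_right 0)"
    proof -
      have "eventually (\<lambda>s::real. 0 < s \<and> s < 1) (at_right 0)"
        using eventually_at_right_real[of 0 1] by simp
      then show ?thesis
      proof (rule eventually_mono)
        fix s :: real assume s: "0 < s \<and> s < 1"
        let ?z = "(1 - s) *\<^sub>R x + s *\<^sub>R y"
        have "\<And>n. n \<bullet> ?z = (1 - s) * (n \<bullet> x) + s * (n \<bullet> y)" by (simp add: inner_add_right)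
        moreover have "n1 \<bullet> x \<ge> 0" "n2 \<bullet> x \<ge> 0" "n3 \<bullet> x \<le> 0" using x by (auto simp: Ws_def)
        moreover have "n1 \<bullet> y > 0" "n2 \<bullet> y > 0" "n3 \<bullet> y < 0" using y by (auto simp: Cs_def)
        ultimately have p: "n1 \<bullet> ?z > 0" "n2 \<bullet> ?z > 0" "n3 \<bullet> ?z < 0" using s
          by (auto intro!: add_nonneg_pos add_nonpos_neg mult_nonneg_nonneg mult_pos_pos
              simp: mult_nonneg_nonpos mult_pos_neg)
        then have "?z \<noteq> 0" by auto
        with p have "f s \<in> Cs n1 n2 n3" unfolding f_def using sgn_in_Cs by blast
        then show "f s \<in> closure (Cs n1 n2 n3)" using closure_subset by blast
      qed
    qed
    ultimately show "x \<in> closure (Cs n1 n2 n3)"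
      using Lim_in_closed_set[of "closure (Cs n1 n2 n3)" f "at_right 0" x] by simp
  qed
qed


lemma connected_Cs: "connected (Cs n1 n2 n3)"
proof -
  define K where "K = {v::real^3. 0 < n1 \<bullet> v} \<inter> {v. 0 < n2 \<bullet> v} \<inter> {v. n3 \<bullet> v < 0}"
  have cK: "convex K" unfolding K_def
    by (intro convex_Int convex_halfspace_gt convex_halfspace_lt)
  have K0: "\<forall>v\<in>K. v \<noteq> 0" by (auto simp: K_def)
  have "connected (sgn ` K)"
    by (rule connected_continuous_image[OF continuous_on_sgn[OF continuous_on_id K0] convex_connected[OF cK]])
  moreover have "sgn ` K = Cs n1 n2 n3"
  proof
    show "sgn ` K \<subseteq> Cs n1 n2 n3" using sgn_in_Cs by (auto simp: K_def)
    show "Cs n1 n2 n3 \<subseteq> sgn ` K"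
    proof
      fix v assume v: "v \<in> Cs n1 n2 n3"
      then have "sgn v = v" by (simp add: Cs_def sgn_div_norm)
      moreover have "v \<in> K" using v by (auto simp: Cs_def K_def)
      ultimately show "v \<in> sgn ` K" by (metis image_eqI)
    qed
  qed
  ultimately show ?thesis by simp
qed

lemma maximal_Cs:
  assumes "connected D" "Cs n1 n2 n3 \<subseteq> D" "Cs n1 n2 n3 \<noteq> {}" "D \<subseteq> sphere 0 1"
    "\<forall>v\<in>D. n1 \<bullet> v \<noteq> 0 \<and> n2 \<bullet> v \<noteq> 0 \<and> n3 \<bullet> v \<noteq> 0"
  shows "D \<subseteq> Cs n1 n2 n3"
proof
  fix y assume y: "y \<in> D"
  obtain x where x: "x \<in> Cs n1 n2 n3" using assms(3) by blast
  have xD: "x \<in> D" using x assms(2) by blast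
  have x1: "n1 \<bullet> x > 0" "n2 \<bullet> x > 0" "n3 \<bullet> x < 0" using x by (auto simp: Cs_def)
  have "n1 \<bullet> y > 0"
  proof (rule ccontr)
    assume "\<not> ?thesis"
    then obtain z where "z \<in> D" "n1 \<bullet> z = 0"
      using connected_ivt_hyperplane[OF assms(1) y xD, of n1 0] x1 by auto
    then show False using assms(5) by blast
  qed
  moreover have "n2 \<bullet> y > 0"
  proof (rule ccontr)
    assume "\<not> ?thesis"
    then obtain z where "z \<in> D" "n2 \<bullet> z = 0"
      using connected_ivt_hyperplane[OF assms(1) y xD, of n2 0] x1 by auto
    then show False using assms(5) by blast
  qed
  moreover have "n3 \<bullet> y < 0"
  proof (rule ccontr)
    assume "\<not> ?thesis"
    then obtain z where "z \<in> D" "n3 \<bullet> z = 0"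
      using connected_ivt_hyperplane[OF assms(1) xD y, of n3 0] x1 by auto
    then show False using assms(5) by blast
  qed
  ultimately show "y \<in> Cs n1 n2 n3" using y assms(4) by (auto simp: Cs_def)
qed

lemma small_step: fixes w x n :: "real^3" assumes "n \<bullet> w < 0"
  shows "\<exists>e>0. \<forall>t. 0 < t \<and> t < e \<longrightarrow> n \<bullet> (w + t *\<^sub>R x) < 0"
proof -
  define e where "e = - (n \<bullet> w) / (\<bar>n \<bullet> x\<bar> + 1)"
  have "\<bar>n \<bullet> x\<bar> + 1 > 0" by simp
  then have e0: "e > 0" unfolding e_def using assms by (intro divide_pos_pos) auto
  have "\<forall>t. 0 < t \<and> t < e \<longrightarrow> n \<bullet> (w + t *\<^sub>R x) < 0"
  proof (intro allI impI)
    fix t assume t: "0 < t \<and> t < e"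
    have "t * (\<bar>n \<bullet> x\<bar> + 1) < e * (\<bar>n \<bullet> x\<bar> + 1)" using t by (intro mult_strict_right_mono) auto
    also have "\<dots> = - (n \<bullet> w)" by (simp add: e_def)
    finally have "t * \<bar>n \<bullet> x\<bar> < - (n \<bullet> w)" using t by (simp add: algebra_simps)
    moreover have "t * (n \<bullet> x) \<le> t * \<bar>n \<bullet> x\<bar>" using t by (intro mult_left_mono) auto
    ultimately show "n \<bullet> (w + t *\<^sub>R x) < 0" by (simp add: inner_add_right)
  qed
  with e0 show ?thesis by blast
qed

lemma w_dot: fixes w n :: "real^3" assumes "norm w = 1"
  shows "w \<bullet> (w + t *\<^sub>R cross3 w n) = 1" "w \<bullet> (w - t *\<^sub>R cross3 w n) = 1"
  using assms dot_cross_self(1)[of w n]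
  by (simp_all add: inner_add_right inner_diff_right dot_square_norm)

lemma exit_ok:
  fixes C :: "(real^3) set" and n3 w :: "real^3" and p1 p2 :: pt
  defines "n1 \<equiv> dual_normal p1" and "n2 \<equiv> dual_normal p2"
  assumes nw: "norm w = 1" and h1: "n1 \<bullet> w = 0" and h2: "n2 \<bullet> w = 0" and h3: "n3 \<bullet> w < 0"
    and hW: "\<And>u. u \<noteq> 0 \<Longrightarrow> n1 \<bullet> u \<ge> 0 \<Longrightarrow> n2 \<bullet> u \<ge> 0 \<Longrightarrow> n3 \<bullet> u \<le> 0 \<Longrightarrow> sgn u \<in> closure C"
  shows "(side_into p2 C w \<and> side_outof p1 C w) \<or> (side_into p1 C w \<and> side_outof p2 C w)"
proof -
  define k where "k = n2 \<bullet> cross3 w n1"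
  have k2: "n1 \<bullet> cross3 w n2 = - k" unfolding k_def using triple_swap[of n1 w n2] by simp
  have z1: "n1 \<bullet> cross3 w n1 = 0" "n2 \<bullet> cross3 w n2 = 0" using dot_cross_self(2) by auto
  have u0: "\<And>t n. w + t *\<^sub>R cross3 w n \<noteq> 0" "\<And>t n. w - t *\<^sub>R cross3 w n \<noteq> 0"
    using w_dot[OF nw] by (metis inner_zero_right zero_neq_one)+
  have out1: "side_outof p1 C w" if "k \<ge> 0"
  proof -
    obtain e where e: "e > 0" "\<forall>t. 0 < t \<and> t < e \<longrightarrow> n3 \<bullet> (w + t *\<^sub>R cross3 w n1) < 0"
      using small_step[OF h3] by blast
    show ?thesis unfolding side_outof_def n1_def[symmetric]
    proof (intro exI[of _ e] conjI allI impI)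
      fix t assume t: "0 < t \<and> t < e"
      show "sgn (w + t *\<^sub>R cross3 w n1) \<in> closure C"
        apply (rule hW[OF u0(1)])
        using t e that h1 h2 z1 by (auto simp: inner_add_right k_def)
    qed (rule e)
  qed
  have in2: "side_into p2 C w" if "k \<ge> 0"
  proof -
    obtain e where e: "e > 0" "\<forall>t. 0 < t \<and> t < e \<longrightarrow> n3 \<bullet> (w + t *\<^sub>R (- cross3 w n2)) < 0"
      using small_step[OF h3] by blast
    show ?thesis unfolding side_into_def n2_def[symmetric]
    proof (intro exI[of _ e] conjI allI impI)
      fix t assume t: "0 < t \<and> t < e"
      show "sgn (w - t *\<^sub>R cross3 w n2) \<in> closure C"
        apply (rule hW[OF u0(2)])
        using t e that h1 h2 z1 k2 by (auto simp: inner_diff_right)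
    qed (rule e)
  qed
  have out2: "side_outof p2 C w" if "k \<le> 0"
  proof -
    obtain e where e: "e > 0" "\<forall>t. 0 < t \<and> t < e \<longrightarrow> n3 \<bullet> (w + t *\<^sub>R cross3 w n2) < 0"
      using small_step[OF h3] by blast
    show ?thesis unfolding side_outof_def n2_def[symmetric]
    proof (intro exI[of _ e] conjI allI impI)
      fix t assume t: "0 < t \<and> t < e"
      show "sgn (w + t *\<^sub>R cross3 w n2) \<in> closure C"
        apply (rule hW[OF u0(1)])
        using t e that h1 h2 z1 k2 by (auto simp: inner_add_right mult_le_0_iff)
    qed (rule e)
  qed
  have in1: "side_into p1 C w" if "k \<le> 0"
  proof -
    obtain e where e: "e > 0" "\<forall>t. 0 < t \<and> t < e \<longrightarrow> n3 \<bullet> (w + t *\<^sub>R (- cross3 w n1)) < 0"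
      using small_step[OF h3] by blast
    show ?thesis unfolding side_into_def n1_def[symmetric]
    proof (intro exI[of _ e] conjI allI impI)
      fix t assume t: "0 < t \<and> t < e"
      show "sgn (w - t *\<^sub>R cross3 w n1) \<in> closure C"
        apply (rule hW[OF u0(2)])
        using t e that h1 h2 z1 by (auto simp: inner_diff_right k_def mult_le_0_iff)
    qed (rule e)
  qed
  show ?thesis using in1 in2 out1 out2 by linarith
qed

lemma side_into_D: assumes "side_into p C w" obtains t where "t > 0" "sgn (w - t *\<^sub>R cross3 w (dual_normal p)) \<in> closure C"
  using assms unfolding side_into_def by (metis field_sum_of_halves half_gt_zero less_add_same_cancel1)
lemma side_outof_D: assumes "side_outof p C w" obtains t where "t > 0" "sgn (w + t *\<^sub>R cross3 w (dual_normal p)) \<in> closure C"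
  using assms unfolding side_outof_def by (metis field_sum_of_halves half_gt_zero less_add_same_cancel1)

lemma nonexit:
  fixes C :: "(real^3) set" and w :: "real^3" and p1 p3 :: pt
  defines "n1 \<equiv> dual_normal p1" and "n3 \<equiv> dual_normal p3"
  assumes nw: "norm w = 1" and h1: "n1 \<bullet> w = 0" and h3: "n3 \<bullet> w = 0" and m0: "n3 \<bullet> cross3 w n1 \<noteq> 0"
    and hC: "\<And>u. sgn u \<in> closure C \<Longrightarrow> n1 \<bullet> u \<ge> 0 \<and> n3 \<bullet> u \<le> 0"
  shows "\<not> (side_into p1 C w \<and> side_outof p3 C w) \<and> \<not> (side_into p3 C w \<and> side_outof p1 C w)"
proof -
  define m where "m = n3 \<bullet> cross3 w n1"
  have k2: "n1 \<bullet> cross3 w n3 = - m" unfolding m_def using triple_swap[of n1 w n3] by simp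
  have i1: "m \<ge> 0" if s: "side_into p1 C w"
  proof -
    obtain t where t: "t > 0" "sgn (w - t *\<^sub>R cross3 w n1) \<in> closure C" using side_into_D[OF s[unfolded n1_def]] n1_def by blast
    have "n3 \<bullet> (w - t *\<^sub>R cross3 w n1) \<le> 0" using hC[OF t(2)] by blast
    then have "t * m \<ge> 0" using h3 by (simp add: inner_diff_right m_def)
    then show ?thesis using t(1) by (simp add: zero_le_mult_iff)
  qed
  have o1: "m \<le> 0" if s: "side_outof p1 C w"
  proof -
    obtain t where t: "t > 0" "sgn (w + t *\<^sub>R cross3 w n1) \<in> closure C" using side_outof_D[OF s[unfolded n1_def]] n1_def by blast
    have "n3 \<bullet> (w + t *\<^sub>R cross3 w n1) \<le> 0" using hC[OF t(2)] by blast
    then have "t * m \<le> 0" using h3 by (simp add: inner_add_right m_def)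
    then show ?thesis using t(1) by (simp add: mult_le_0_iff)
  qed
  have i3: "m \<ge> 0" if s: "side_into p3 C w"
  proof -
    obtain t where t: "t > 0" "sgn (w - t *\<^sub>R cross3 w n3) \<in> closure C" using side_into_D[OF s] n3_def by blast
    have "n1 \<bullet> (w - t *\<^sub>R cross3 w n3) \<ge> 0" using hC[OF t(2)] by blast
    then have "t * m \<ge> 0" using h1 k2 by (simp add: inner_diff_right)
    then show ?thesis using t(1) by (simp add: zero_le_mult_iff)
  qed
  have o3: "m \<le> 0" if s: "side_outof p3 C w"
  proof -
    obtain t where t: "t > 0" "sgn (w + t *\<^sub>R cross3 w n3) \<in> closure C" using side_outof_D[OF s] n3_def by blast
    have "n1 \<bullet> (w + t *\<^sub>R cross3 w n3) \<ge> 0" using hC[OF t(2)] by blast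
    then have "t * m \<le> 0" using h1 k2 by (simp add: inner_add_right)
    then show ?thesis using t(1) by (simp add: mult_le_0_iff)
  qed
  have "m \<noteq> 0" using m0 m_def by simp
  then show ?thesis using i1 o1 i3 o3 by fastforce
qed


lemma gpD: "general_position S \<Longrightarrow> a \<in> S \<Longrightarrow> b \<in> S \<Longrightarrow> c \<in> S \<Longrightarrow> a \<noteq> b \<Longrightarrow> a \<noteq> c \<Longrightarrow> b \<noteq> c \<Longrightarrow> orient a b c \<noteq> 0"
  unfolding general_position_def by blast


lemma witness_sc:
  assumes gp: "general_position S" and w: "exit_edge_witness S a b c" and p: "p \<in> S" "p \<notin> {a,b,c}"
  shows "orient a b p * orient p b c < 0 \<and> orient a b p * orient a p c < 0"
proof -
  have d: "a \<in> S" "b \<in> S" "c \<in> S" "a \<noteq> b" "a \<noteq> c" "b \<noteq> c"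
    and n1: "\<not> strictly_separates a p b c" and n2: "\<not> strictly_separates b p a c"
    using w p unfolding exit_edge_witness_def by auto
  have z1: "orient a p b \<noteq> 0" "orient a p c \<noteq> 0" "orient b p a \<noteq> 0" "orient b p c \<noteq> 0"
    by (rule gpD[OF gp]; use d p in auto)+
  have "orient a p b * orient a p c \<ge> 0" using n1 p unfolding strictly_separates_def by auto
  then have q1: "orient a p b * orient a p c > 0" using z1 by (simp add: order_le_less)
  have "orient b p a * orient b p c \<ge> 0" using n2 p unfolding strictly_separates_def by auto
  then have q2: "orient b p a * orient b p c > 0" using z1 by (simp add: order_le_less)
  have e1: "orient a p b = - orient a b p" "orient b p a = orient a b p" "orient b p c = - orient p b c"
    by (simp_all add: orient_def algebra_simps)
  show ?thesis using q1 q2 unfolding e1 by simp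
qed

lemma inner_bary: "orient a b c * (dual_normal p \<bullet> v) = orient p b c * (dual_normal a \<bullet> v) + orient a p c * (dual_normal b \<bullet> v) + orient a b p * (dual_normal c \<bullet> v)"
proof -
  have "(orient a b c *\<^sub>R dual_normal p) \<bullet> v = (orient p b c *\<^sub>R dual_normal a + orient a p c *\<^sub>R dual_normal b + orient a b p *\<^sub>R dual_normal c) \<bullet> v"
    by (simp only: bary[of a b c p])
  then show ?thesis by (simp add: inner_add_left)
qed

lemma tri_main:
  fixes a b c :: pt
  defines "na \<equiv> dual_normal a" and "nb \<equiv> dual_normal b" and "nc \<equiv> dual_normal c"
  assumes gp: "general_position S" and abc: "a \<in> S" "b \<in> S" "c \<in> S" "a \<noteq> b" "a \<noteq> c" "b \<noteq> c"
    and sc: "\<forall>p\<in>S. p \<notin> {a,b,c} \<longrightarrow> orient a b p * orient p b c < 0 \<and> orient a b p * orient a p c < 0"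
  shows "unmarked_tri_exit_ab S a b c (Cs na nb nc)"
proof -
  define C where "C = Cs na nb nc"
  define T where "T = na \<bullet> cross3 nb nc"
  have T0: "T \<noteq> 0" unfolding T_def na_def nb_def nc_def triple_orient using gpD[OF gp abc] by simp
  define v0 where "v0 = T *\<^sub>R (cross3 nb nc + cross3 nc na - cross3 na nb)"
  have tb: "nb \<bullet> cross3 nc na = T" "nc \<bullet> cross3 na nb = T" unfolding T_def using triple_cyc[of na nb nc] by simp_all
  have "na \<bullet> v0 = T * T" "nb \<bullet> v0 = T * T" "nc \<bullet> v0 = - (T * T)"
    unfolding v0_def using tb T_def dot_cross_self
    by (simp_all add: inner_add_right inner_diff_right)
  moreover have "T * T > 0" using T0 by (metis not_real_square_gt_zero)
  ultimately have "v0 \<noteq> 0 \<and> na \<bullet> v0 > 0 \<and> nb \<bullet> v0 > 0 \<and> nc \<bullet> v0 < 0" by auto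
  then have "sgn v0 \<in> C" unfolding C_def sgn_in_Cs .
  then have Cne: "C \<noteq> {}" by blast
  have Cin: "\<And>v. v \<in> C \<Longrightarrow> norm v = 1 \<and> na \<bullet> v > 0 \<and> nb \<bullet> v > 0 \<and> nc \<bullet> v < 0"
    unfolding C_def Cs_def by auto
  have other: "dual_normal p \<bullet> v \<noteq> 0" if p: "p \<in> S" and v: "v \<in> C" for p v
  proof (cases "p \<in> {a,b,c}")
    case True then show ?thesis using Cin[OF v] na_def nb_def nc_def by auto
  next
    case False
    have s: "orient a b p * orient p b c < 0" "orient a b p * orient a p c < 0" using sc p False by auto
    have e: "orient a b c * (dual_normal p \<bullet> v) = orient p b c * (na \<bullet> v) + orient a p c * (nb \<bullet> v) + orient a b p * (nc \<bullet> v)"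
      unfolding na_def nb_def nc_def by (rule inner_bary)
    have o3: "orient a b p \<noteq> 0" using s by auto
    have "orient a b p * (orient a b c * (dual_normal p \<bullet> v)) =
        (orient a b p * orient p b c) * (na \<bullet> v) + (orient a b p * orient a p c) * (nb \<bullet> v) + (orient a b p * orient a b p) * (nc \<bullet> v)"
      unfolding e by (simp add: algebra_simps)
    also have "\<dots> < 0"
    proof -
      have "(orient a b p * orient p b c) * (na \<bullet> v) < 0" using s Cin[OF v] by (simp add: mult_neg_pos)
      moreover have "(orient a b p * orient a p c) * (nb \<bullet> v) < 0" using s Cin[OF v] by (simp add: mult_neg_pos)
      moreover have "(orient a b p * orient a b p) * (nc \<bullet> v) < 0" using o3 Cin[OF v] by (intro mult_pos_neg) (auto simp: zero_less_mult_iff linorder_neq_iff)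
      ultimately show ?thesis by linarith
    qed
    finally show ?thesis by auto
  qed
  define U3 where "U3 = sphere 0 1 - (dline a \<union> dline b \<union> dline c)"
  define U where "U = sphere 0 1 - \<Union>(dline ` S)"
  have UU3: "U \<subseteq> U3" unfolding U_def U3_def using abc by auto
  have CU: "C \<subseteq> U"
  proof
    fix v assume v: "v \<in> C"
    have "v \<in> sphere 0 1" using Cin[OF v] by simp
    moreover have "v \<notin> dline p" if "p \<in> S" for p using other[OF that v] unfolding dline_def by blast
    ultimately show "v \<in> U" unfolding U_def by blast
  qed
  have conC: "connected C" unfolding C_def by (rule connected_Cs)
  have maxi: "D = C" if "D \<noteq> {}" "C \<subseteq> D" "D \<subseteq> U3" "connected D" for D
  proof
    have sub: "D \<subseteq> sphere 0 1" using that(3) U3_def by auto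
    have nz: "\<forall>v\<in>D. na \<bullet> v \<noteq> 0 \<and> nb \<bullet> v \<noteq> 0 \<and> nc \<bullet> v \<noteq> 0"
    proof
      fix v assume "v \<in> D"
      then have "v \<in> sphere 0 1" "v \<notin> dline a" "v \<notin> dline b" "v \<notin> dline c" using that(3) unfolding U3_def by auto
      then show "na \<bullet> v \<noteq> 0 \<and> nb \<bullet> v \<noteq> 0 \<and> nc \<bullet> v \<noteq> 0"
        unfolding dline_def na_def nb_def nc_def by blast
    qed
    show "D \<subseteq> C" unfolding C_def
      by (rule maximal_Cs[OF that(4)]) (use that(2) Cne sub nz in \<open>simp_all add: C_def\<close>)
  qed (rule that(2))
  have comp3: "C \<in> components U3"
    unfolding in_components_maximal
  proof (intro conjI allI impI)
    show "C \<subseteq> U3" using CU UU3 by (rule order_trans)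
    fix D assume "D \<noteq> {} \<and> C \<subseteq> D \<and> D \<subseteq> U3 \<and> connected D"
    then show "D = C" using maxi by blast
  qed (use Cne conC in auto)
  have compU: "C \<in> components U"
    unfolding in_components_maximal
  proof (intro conjI allI impI)
    show "C \<subseteq> U" by (rule CU)
    fix D assume "D \<noteq> {} \<and> C \<subseteq> D \<and> D \<subseteq> U \<and> connected D"
    then show "D = C" using maxi UU3 by blast
  qed (use Cne conC in auto)
  have e2: "na \<bullet> vector [0, 1, 0] = -1" "nc \<bullet> vector [0, -1, 0] = 1"
    unfolding na_def nc_def by (simp_all add: inner_vec_def sum_3 dn_comp vector_3)
  have unm: "\<not> marked C" unfolding marked_def
  proof
    assume "vector [0, 1, 0] \<in> C \<or> vector [0, -1, 0] \<in> C"
    then show False using e2 Cin by fastforce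
  qed
  have cl: "closure C = Ws na nb nc" unfolding C_def by (rule closure_Cs) (use Cne in \<open>simp add: C_def\<close>)
  have clW: "sgn u \<in> closure C \<longleftrightarrow> u \<noteq> 0 \<and> na \<bullet> u \<ge> 0 \<and> nb \<bullet> u \<ge> 0 \<and> nc \<bullet> u \<le> 0" for u
    unfolding cl by (rule sgn_in_Ws)
  have clin: "w \<in> closure C \<Longrightarrow> norm w = 1 \<and> na \<bullet> w \<ge> 0 \<and> nb \<bullet> w \<ge> 0 \<and> nc \<bullet> w \<le> 0" for w
    unfolding cl Ws_def by auto
  have crs: "cross3 na nc \<noteq> 0" "cross3 nb nc \<noteq> 0"
    unfolding na_def nb_def nc_def using cross_dn abc by metis+
  have hC: "\<And>u. sgn u \<in> closure C \<Longrightarrow> na \<bullet> u \<ge> 0 \<and> nc \<bullet> u \<le> 0" using clW by blast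
  have hC2: "\<And>u. sgn u \<in> closure C \<Longrightarrow> nb \<bullet> u \<ge> 0 \<and> nc \<bullet> u \<le> 0" using clW by blast
  have hW: "\<And>u. u \<noteq> 0 \<Longrightarrow> na \<bullet> u \<ge> 0 \<Longrightarrow> nb \<bullet> u \<ge> 0 \<Longrightarrow> nc \<bullet> u \<le> 0 \<Longrightarrow> sgn u \<in> closure C"
    using clW by blast
  have vert: "exit_vertex_prop a b c C w \<longleftrightarrow> w \<in> dline a \<inter> dline b" if tv: "tri_vertex a b c C w" for w
  proof
    assume ex: "exit_vertex_prop a b c C w"
    then have wc: "w \<in> closure C" unfolding exit_vertex_prop_def by blast
    then have nw: "norm w = 1" using clin by blast
    then have w0: "w \<noteq> 0" by auto
    obtain p q where pq: "p \<in> {a,b,c}" "q \<in> {a,b,c}" "p \<noteq> q" "w \<in> dline p" "w \<in> dline q"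
      "side_into p C w" "side_outof q C w" using ex unfolding exit_vertex_prop_def by blast
    have hac: False if pq2: "(p = a \<and> q = c) \<or> (p = c \<and> q = a)"
    proof -
      have h1: "na \<bullet> w = 0" "nc \<bullet> w = 0" using pq(4,5) pq2 unfolding dline_def na_def nc_def by auto
      have m0: "nc \<bullet> cross3 w na \<noteq> 0" by (rule triple_nz[OF w0 h1 crs(1)])
      have "\<not> (side_into a C w \<and> side_outof c C w) \<and> \<not> (side_into c C w \<and> side_outof a C w)"
        by (rule nonexit[of w a c C, folded na_def nc_def, OF nw h1 m0 hC])
      then show False using pq(6,7) pq2 by auto
    qed
    have hbc: False if pq2: "(p = b \<and> q = c) \<or> (p = c \<and> q = b)"
    proof -
      have h1: "nb \<bullet> w = 0" "nc \<bullet> w = 0" using pq(4,5) pq2 unfolding dline_def nb_def nc_def by auto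
      have m0: "nc \<bullet> cross3 w nb \<noteq> 0" by (rule triple_nz[OF w0 h1 crs(2)])
      have "\<not> (side_into b C w \<and> side_outof c C w) \<and> \<not> (side_into c C w \<and> side_outof b C w)"
        by (rule nonexit[of w b c C, folded nb_def nc_def, OF nw h1 m0 hC2])
      then show False using pq(6,7) pq2 by auto
    qed
    have "p = a \<or> p = b \<or> p = c" "q = a \<or> q = b \<or> q = c" using pq(1,2) by auto
    then have "(p = a \<and> q = b) \<or> (p = b \<and> q = a)" using hac hbc pq(3) by blast
    then show "w \<in> dline a \<inter> dline b" using pq(4,5) by blast
  next
    assume wab: "w \<in> dline a \<inter> dline b"
    have wc: "w \<in> closure C" using tv unfolding tri_vertex_def by blast
    then have nw: "norm w = 1" and c3: "nc \<bullet> w \<le> 0" using clin by blast+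
    have h: "na \<bullet> w = 0" "nb \<bullet> w = 0" using wab unfolding dline_def na_def nb_def by auto
    have "nc \<bullet> w \<noteq> 0"
    proof
      assume "nc \<bullet> w = 0"
      then have "w = 0" using zero_from_ortho[of na nb nc w] T0 T_def h by blast
      then show False using nw by simp
    qed
    then have c3': "nc \<bullet> w < 0" using c3 by simp
    have "(side_into b C w \<and> side_outof a C w) \<or> (side_into a C w \<and> side_outof b C w)"
      by (rule exit_ok[of w a b nc C, folded na_def nb_def, OF nw h c3' hW])
    moreover have "a \<in> {a,b,c}" "b \<in> {a,b,c}" "w \<in> dline a" "w \<in> dline b" using wab by auto
    ultimately show "exit_vertex_prop a b c C w" unfolding exit_vertex_prop_def using wc abc(4) by metis
  qed
  have "unmarked_tri_exit_ab S a b c C" unfolding unmarked_tri_exit_ab_def tri_cell_def is_cell_def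
    using compU[unfolded U_def] comp3[unfolded U3_def] unm vert by blast
  then show ?thesis by (simp add: C_def)
qed


theorem mainTheorem9:
  fixes S :: "(real \<times> real) set" and a b c d :: "real \<times> real"
  assumes "finite S" and "general_position S"
    and "a \<in> S" and "b \<in> S"
    and "exit_edge_witness S a b c" and "exit_edge_witness S a b d" and "c \<noteq> d"
  shows "\<exists>C D. unmarked_tri_exit_ab S a b c C \<and> unmarked_tri_exit_ab S a b d D \<and>
           C \<noteq> D \<and> C \<noteq> uminus ` D"
proof -
  note gp = assms(2) and wc = assms(5) and wd = assms(6)
  have c: "a \<in> S" "b \<in> S" "c \<in> S" "a \<noteq> b" "a \<noteq> c" "b \<noteq> c" using wc unfolding exit_edge_witness_def by auto
  have d: "d \<in> S" "a \<noteq> d" "b \<noteq> d" using wd unfolding exit_edge_witness_def by auto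
  define na where "na = dual_normal a"
  define nb where "nb = dual_normal b"
  define nc where "nc = dual_normal c"
  define nd where "nd = dual_normal d"
  define C where "C = Cs na nb nc"
  define D where "D = Cs na nb nd"
  have uC: "unmarked_tri_exit_ab S a b c C" unfolding C_def na_def nb_def nc_def
    by (rule tri_main[OF gp c]) (use witness_sc[OF gp wc] in blast)
  have uD: "unmarked_tri_exit_ab S a b d D" unfolding D_def na_def nb_def nd_def
    by (rule tri_main[OF gp c(1,2) d(1) c(4) d(2,3)]) (use witness_sc[OF gp wd] in blast)
  have Cne: "C \<noteq> {}" using uC unfolding unmarked_tri_exit_ab_def tri_cell_def is_cell_def
    using in_components_nonempty by blast
  have dn: "d \<notin> {a,b,c}" using d assms(7) by auto
  have cn: "c \<notin> {a,b,d}" using c assms(7) by auto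
  have s1: "orient a b d * orient d b c < 0" "orient a b d * orient a d c < 0"
    using witness_sc[OF gp wc d(1) dn] by auto
  have s2: "orient a b c * orient c b d < 0" "orient a b c * orient a c d < 0"
    using witness_sc[OF gp wd c(3) cn] by auto
  have e: "orient c b d = - orient d b c" "orient a c d = - orient a d c"
    by (simp_all add: orient_def algebra_simps)
  define Dc where "Dc = orient a b c"
  define o1 where "o1 = orient d b c"
  define o2 where "o2 = orient a d c"
  define o3 where "o3 = orient a b d"
  have q1: "Dc * o1 > 0" "Dc * o2 > 0" using s2 e unfolding Dc_def o1_def o2_def by auto
  have q3: "o3 * o1 < 0" using s1 unfolding o1_def o3_def by auto
  have q4: "Dc * o3 < 0"
  proof -
    have "(Dc * o1) * (o3 * o1) < 0" using q1 q3 by (simp add: mult_pos_neg)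
    then have "(Dc * o3) * (o1 * o1) < 0" by (simp add: algebra_simps)
    moreover have "o1 * o1 \<ge> 0" by simp
    ultimately show ?thesis by (metis mult_nonneg_nonneg not_le mult_nonpos_nonneg)
  qed
  have pos: "nd \<bullet> v > 0" if v: "v \<in> C" for v
  proof -
    have vv: "na \<bullet> v > 0" "nb \<bullet> v > 0" "nc \<bullet> v < 0" using v unfolding C_def Cs_def by auto
    have eq: "Dc * (nd \<bullet> v) = o1 * (na \<bullet> v) + o2 * (nb \<bullet> v) + o3 * (nc \<bullet> v)"
      unfolding Dc_def o1_def o2_def o3_def na_def nb_def nc_def nd_def by (rule inner_bary)
    have "Dc * (Dc * (nd \<bullet> v)) = (Dc * o1) * (na \<bullet> v) + (Dc * o2) * (nb \<bullet> v) + (Dc * o3) * (nc \<bullet> v)"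
      unfolding eq by (simp add: algebra_simps)
    also have "\<dots> > 0"
    proof -
      have "(Dc * o1) * (na \<bullet> v) > 0" "(Dc * o2) * (nb \<bullet> v) > 0" "(Dc * o3) * (nc \<bullet> v) > 0"
        using q1 q4 vv by (simp_all add: mult_neg_neg)
      then show ?thesis by linarith
    qed
    finally have "(Dc * Dc) * (nd \<bullet> v) > 0" by (simp add: algebra_simps)
    moreover have "Dc * Dc \<ge> 0" by simp
    ultimately show ?thesis by (metis mult_nonneg_nonpos not_le)
  qed
  have "C \<noteq> D"
  proof
    assume "C = D"
    obtain v where "v \<in> C" using Cne by blast
    then have "v \<in> D" "nd \<bullet> v > 0" using pos \<open>C = D\<close> by auto
    then show False unfolding D_def Cs_def by auto
  qed
  moreover have "C \<noteq> uminus ` D"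
  proof
    assume h: "C = uminus ` D"
    obtain v where v: "v \<in> C" using Cne by blast
    then obtain y where "y \<in> D" "v = - y" using h by auto
    then have "na \<bullet> v < 0" unfolding D_def Cs_def by auto
    then show False using v unfolding C_def Cs_def by auto
  qed
  ultimately show ?thesis using uC uD by blast
qed

end
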